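(* Let $p\ge1$ and let $\mathbf X$ be a random variable with values in $\mathcal G^w_p(V)$ such that $\mathbb E|\langle\mathbf X_{0,T},e_\sigma\rangle|<\infty$ for all $\sigma\in[d]^*$. Then for every $k\ge1$ and nonempty words $\tau_1,\dots,\tau_k\in[d]^*$, with $\boldsymbol\tau=(\tau_1,\dots,\tau_k)$, $$\langle\kappa_{\mathbf X},e_{\tau_1}\sqcup\cdots\sqcup e_{\tau_k}\rangle=\sum_{\mathbf a\in\mathrm{Orp}(\boldsymbol\tau)}(-1)^{|\mathbf a|-1}\frac{\mathbf a!}{|\mathbf a|}\,\mu_{\mathbf X}(\mathbf a).$$
   Context: Let $V=\mathbb R^d$ with basis $e_1,\dots,e_d$; $[n]=\{1,\dots,n\}$; $[d]^*=\bigcup_{m\ge0}[d]^m$ is the set of words, $|\tau|$ the length, $e_\tau=e_{i_1}\otimes\cdots\otimes e_{i_m}$ for $\tau=(i_1,\dots,i_m)$, $e_{()}=1$. $T(V)=\bigoplus_{m\ge0}V^{\otimes m}$, $T((V))=\prod_{m\ge0}V^{\otimes m}$ (an algebra under $\otimes$), pairing $\langle s,t\rangle=\sum_\tau s_\tau t_\tau$. For $y\in T((V))$ with $\langle y,1\rangle=1$, $\log y=\sum_{n\ge1}\frac{(-1)^{n-1}}{n}(y-1)^{\otimes n}$. The shuffle product $\sqcup$ on $T(V)$ is the bilinear extension of $e_{\tau_1}\sqcup e_{\tau_2}=\sum_\sigma e_\sigma$ over all interleavings $\sigma$ of $\tau_1,\tau_2$ counted with multiplicity; it is associative and commutative. Weakly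 geometric $p$-rough paths ($p\ge1$, $T>0$): maps $\mathbf x:\{(s,t):0\le s\le t\le T\}\to T((V))$ with, for $0\le s\le t\le u\le T$, (i) $\langle\mathbf x_{s,t},1\rangle=1$, $\langle\mathbf x_{s,t},f\sqcup g\rangle=\langle\mathbf x_{s,t},f\rangle\langle\mathbf x_{s,t},g\rangle$ for $f,g\in T(V)$; (ii) $\mathbf x_{s,t}\otimes\mathbf x_{t,u}=\mathbf x_{s,u}$; (iii) finite $p$-variation $\max_{1\le m\le p}\sup_D(\sum_i|\pi_m\mathbf x_{t_i,t_{i+1}}|^{p/m})^{1/p}<\infty$. $\mathcal G^w_p(V)$ is the set of these. For a random $\mathbf X$ with integrable signature coordinates: $\mu_{\mathbf X}=\mathbb E[\mathbf X_{0,T}]$, $\kappa_{\mathbf X}=\log\mu_{\mathbf X}$. Partitions and ordered partitions: for a finite poset $P$, $\mathcal P(P)$ is the set of partitions into nonempty blocks, ordered by refinement; $|\mathbf a|$ is the number of blocks. $f:P\to\mathbb N$ is order-preserving if $x\le y\Rightarrow f(x)\le f(y)$; $\ker f$ is the set of nonempty fibres; $\mathrm{Orp}(P)=\{\ker f: f \text{ order-preserving}\}$; for $\mathbf a\in\mathrm{Orp}(P)$, $\mathbf a!=\#\{f:P\to[|\mathbf a|]\text{ order-preserving}:\ker f=\mathbf a\}$. Word poset: $P_{\boldsymbol\tau}=\{(j,p):j\in[k],p\in[|\tau_j|]\}$ (positions treated as distinct even if letters repeat), with $(j,p)\le(j',p')$ iff $j=j'$ and $p\le p'$; $\mathcal P(\boldsymbol\tau)=\mathcal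 P(P_{\boldsymbol\tau})$, $\mathrm{Orp}(\boldsymbol\tau)=\mathrm{Orp}(P_{\boldsymbol\tau})$. For a block $B$ and $j$, $B^j=B\cap(\{j\}\times[|\tau_j|])$; if nonempty with positions $p_1<\dots<p_r$, $e_{B^j}=e_{\tau_j(p_1)}\otimes\cdots\otimes e_{\tau_j(p_r)}$ ($\tau_j(p)$ the $p$-th letter). Generalised moment: $\mu_{\mathbf X}(\mathbf a)=\prod_{B\in\mathbf a}\mathbb E\big[\prod_{j:B^j\ne\emptyset}\langle\mathbf X_{0,T},e_{B^j}\rangle\big]$. *)

theory Defs
  imports "HOL-Probability.Probability"
begin

text \<open>Words over the alphabet [d] = {1..d} are lists of naturals with letters in {1..d}.
  Elements of T((V)) are represented by their coordinate functions (word to real).\<close>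

definition is_word :: "nat \<Rightarrow> nat list \<Rightarrow> bool" where
  "is_word d w \<longleftrightarrow> set w \<subseteq> {1..d}"

text \<open>Shuffle of two words, as a list of words counted with multiplicity.\<close>
fun shuffle :: "'a list \<Rightarrow> 'a list \<Rightarrow> 'a list list" where
  "shuffle [] ys = [ys]"
| "shuffle xs [] = [xs]"
| "shuffle (x # xs) (y # ys) =
     map ((#) x) (shuffle xs (y # ys)) @ map ((#) y) (shuffle (x # xs) ys)"

text \<open>e_{t1} shuffle ... shuffle e_{tk}, as a list of words with multiplicity.\<close>
fun shuffle_many :: "'a list list \<Rightarrow> 'a list list" where
  "shuffle_many [] = [[]]"
| "shuffle_many (t # ts) = concat (map (shuffle t) (shuffle_many ts))"

text \<open>Pairing of a tensor series with a tensor given as a list of basis words (with multiplicity).\<close>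
definition pair_words :: "(nat list \<Rightarrow> real) \<Rightarrow> nat list list \<Rightarrow> real" where
  "pair_words s ws = sum_list (map s ws)"

definition tprod :: "(nat list \<Rightarrow> real) \<Rightarrow> (nat list \<Rightarrow> real) \<Rightarrow> nat list \<Rightarrow> real" where
  "tprod s t w = (\<Sum>i\<le>length w. s (take i w) * t (drop i w))"

definition tunit :: "nat list \<Rightarrow> real" where
  "tunit w = (if w = [] then 1 else 0)"

fun tpow :: "(nat list \<Rightarrow> real) \<Rightarrow> nat \<Rightarrow> nat list \<Rightarrow> real" where
  "tpow y 0 = tunit"
| "tpow y (Suc n) = tprod (y) (tpow y n)"

definition tlog :: "(nat list \<Rightarrow> real) \<Rightarrow> nat list \<Rightarrow> real" where
  "tlog y w = (\<Sum>n. (-1) ^ n / real (Suc n) * tpow (\<lambda>v. y v - tunit v) (Suc n) w)"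

definition level_norm :: "nat \<Rightarrow> nat \<Rightarrow> (nat list \<Rightarrow> real) \<Rightarrow> real" where
  "level_norm d m x = sqrt (\<Sum>w\<in>{w. length w = m \<and> is_word d w}. (x w)\<^sup>2)"

definition is_partition :: "real \<Rightarrow> real list \<Rightarrow> bool" where
  "is_partition T ts \<longleftrightarrow> length ts \<ge> 2 \<and> hd ts = 0 \<and> last ts = T \<and> sorted_wrt (<) ts"

definition finite_pvar :: "nat \<Rightarrow> real \<Rightarrow> real \<Rightarrow> (real \<times> real \<Rightarrow> nat list \<Rightarrow> real) \<Rightarrow> bool" where
  "finite_pvar d p T x \<longleftrightarrow>
     (\<forall>m::nat. 1 \<le> m \<and> real m \<le> p \<longrightarrow>
        (\<exists>C. \<forall>ts. is_partition T ts \<longrightarrow>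
           (\<Sum>i<length ts - 1. level_norm d m (x (ts ! i, ts ! Suc i)) powr (p / real m)) \<le> C))"

definition weakly_geometric :: "nat \<Rightarrow> real \<Rightarrow> real \<Rightarrow> (real \<times> real \<Rightarrow> nat list \<Rightarrow> real) set" where
  "weakly_geometric d p T = {x.
     (\<forall>s t. 0 \<le> s \<and> s \<le> t \<and> t \<le> T \<longrightarrow>
        x (s, t) [] = 1 \<and>
        (\<forall>u v. is_word d u \<and> is_word d v \<longrightarrow>
            pair_words (x (s, t)) (shuffle u v) = x (s, t) u * x (s, t) v)) \<and>
     (\<forall>s t u. 0 \<le> s \<and> s \<le> t \<and> t \<le> u \<and> u \<le> T \<longrightarrow>
        (\<forall>w. is_word d w \<longrightarrow> tprod (x (s, t)) (x (t, u)) w = x (s, u) w)) \<and>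
     finite_pvar d p T x}"

definition exp_sig :: "'a measure \<Rightarrow> ('a \<Rightarrow> real \<times> real \<Rightarrow> nat list \<Rightarrow> real) \<Rightarrow> real \<Rightarrow> nat list \<Rightarrow> real" where
  "exp_sig M X T w = integral\<^sup>L M (\<lambda>\<omega>. X \<omega> (0, T) w)"

definition sig_cumulant :: "'a measure \<Rightarrow> ('a \<Rightarrow> real \<times> real \<Rightarrow> nat list \<Rightarrow> real) \<Rightarrow> real \<Rightarrow> nat list \<Rightarrow> real" where
  "sig_cumulant M X T = tlog (exp_sig M X T)"

text \<open>Word poset (0-based indices): (j,q) with j < k and q < length of the j-th word.\<close>
definition word_poset :: "'b list list \<Rightarrow> (nat \<times> nat) set" where
  "word_poset ts = {(j, q). j < length ts \<and> q < length (ts ! j)}"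

definition order_pres :: "(nat \<times> nat) set \<Rightarrow> (nat \<times> nat \<Rightarrow> nat) \<Rightarrow> bool" where
  "order_pres P f \<longleftrightarrow> (\<forall>j q q'. (j, q) \<in> P \<and> (j, q') \<in> P \<and> q \<le> q' \<longrightarrow> f (j, q) \<le> f (j, q'))"

definition kernel_of :: "(nat \<times> nat) set \<Rightarrow> (nat \<times> nat \<Rightarrow> nat) \<Rightarrow> (nat \<times> nat) set set" where
  "kernel_of P f = {{x \<in> P. f x = i} | i. i \<in> f ` P}"

definition Orp :: "'b list list \<Rightarrow> (nat \<times> nat) set set set" where
  "Orp ts = {kernel_of (word_poset ts) f | f. order_pres (word_poset ts) f}"

definition orp_fact :: "'b list list \<Rightarrow> (nat \<times> nat) set set \<Rightarrow> nat" where
  "orp_fact ts a = card {f \<in> word_poset ts \<rightarrow>\<^sub>E {1..card a}.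
      order_pres (word_poset ts) f \<and> kernel_of (word_poset ts) f = a}"

text \<open>e_{B^j}: letters of the j-th word at positions in B, in increasing order.\<close>
definition block_word :: "'b list list \<Rightarrow> (nat \<times> nat) set \<Rightarrow> nat \<Rightarrow> 'b list" where
  "block_word ts B j = map (\<lambda>q. ts ! j ! q) (sorted_list_of_set {q. (j, q) \<in> B})"

definition gen_moment :: "'a measure \<Rightarrow> ('a \<Rightarrow> real \<times> real \<Rightarrow> nat list \<Rightarrow> real) \<Rightarrow> real
    \<Rightarrow> nat list list \<Rightarrow> (nat \<times> nat) set set \<Rightarrow> real" where
  "gen_moment M X T ts a = (\<Prod>B\<in>a. integral\<^sup>L M (\<lambda>\<omega>.
      \<Prod>j\<in>{j. j < length ts \<and> (\<exists>q. (j, q) \<in> B)}. X \<omega> (0, T) (block_word ts B j)))"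

end

theory Submission
  imports Defs
begin


lemma shuffle_Nil2[simp]: "shuffle xs [] = [xs]"
  by (cases xs) auto

lemma shuffle_length: "w \<in> set (shuffle u v) \<Longrightarrow> length w = length u + length v"
  by (induction u v arbitrary: w rule: shuffle.induct) auto

lemma shuffle_set: "w \<in> set (shuffle u v) \<Longrightarrow> set w \<subseteq> set u \<union> set v"
  by (induction u v arbitrary: w rule: shuffle.induct) fastforce+

lemma shuffle_many_length:
  "w \<in> set (shuffle_many ts) \<Longrightarrow> length w = sum_list (map length ts)"
  by (induction ts arbitrary: w) (auto dest: shuffle_length)

lemma shuffle_many_set:
  "w \<in> set (shuffle_many ts) \<Longrightarrow> set w \<subseteq> \<Union> (set ` set ts)"
  by (induction ts arbitrary: w) (fastforce dest: shuffle_set)+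

lemma shuffle_many_all_Nil:
  "\<forall>t\<in>set ts. t = [] \<Longrightarrow> shuffle_many ts = [[]]"
  by (induction ts) auto

lemma sum_list_swap:
  "(\<Sum>x\<leftarrow>xs. \<Sum>y\<leftarrow>ys. f x y) = (\<Sum>y\<leftarrow>ys. \<Sum>x\<leftarrow>xs. (f x y :: 'c::comm_monoid_add))"
  by (induction xs) (auto simp: sum_list_addf)

lemma sum_list_sum_swap:
  "(\<Sum>x\<leftarrow>xs. \<Sum>i\<in>A. f x i) = (\<Sum>i\<in>A. \<Sum>x\<leftarrow>xs. (f x i :: 'c::comm_monoid_add))"
  by (induction xs) (auto simp: sum.distrib)

lemma atMost_Suc_split:
  "(\<Sum>i\<le>Suc n. f i) = f 0 + (\<Sum>i\<le>n. f (Suc i))"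
  by (rule sum.atMost_Suc_shift)

lemma sum_takedrop_Cons:
  "(\<Sum>i\<le>length (x#w). F (take i (x#w)) (drop i (x#w))) = F [] (x#w) + (\<Sum>i\<le>length w. F (x#take i w) (drop i w))"
  unfolding length_Cons atMost_Suc_split by simp

lemma delta2:
  "(\<Sum>w\<leftarrow>shuffle u v. \<Sum>i\<le>length w. F (take i w) (drop i w)) =
   (\<Sum>i\<le>length u. \<Sum>j\<le>length v. \<Sum>w1\<leftarrow>shuffle (take i u) (take j v).
        \<Sum>w2\<leftarrow>shuffle (drop i u) (drop j v). (F w1 w2 :: 'c::comm_monoid_add))"
proof (induction u v arbitrary: F rule: shuffle.induct)
  case (1 ys)
  then show ?case by simp
next
  case (2 x xs)
  then show ?case by simp
next
  case (3 x xs y ys)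
  define R where "R i j = (\<Sum>w1\<leftarrow>shuffle (take i (x#xs)) (take j (y#ys)).
        \<Sum>w2\<leftarrow>shuffle (drop i (x#xs)) (drop j (y#ys)). F w1 w2)" for i j
  have r00: "R 0 0 = (\<Sum>w\<leftarrow>shuffle (x#xs) (y#ys). F [] w)"
    by (simp add: R_def)
  have rSS: "R (Suc i) (Suc j) =
     (\<Sum>w1\<leftarrow>shuffle (take i xs) (take (Suc j) (y#ys)). \<Sum>w2\<leftarrow>shuffle (drop i xs) (drop (Suc j) (y#ys)). F (x#w1) w2)
   + (\<Sum>w1\<leftarrow>shuffle (take (Suc i) (x#xs)) (take j ys). \<Sum>w2\<leftarrow>shuffle (drop (Suc i) (x#xs)) (drop j ys). F (y#w1) w2)"
    for i j by (simp add: R_def comp_def)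
  have IHA: "(\<Sum>w\<leftarrow>shuffle xs (y#ys). \<Sum>i\<le>length w. F (x # take i w) (drop i w)) =
     (\<Sum>i\<le>length xs. \<Sum>j\<le>length (y#ys). \<Sum>w1\<leftarrow>shuffle (take i xs) (take j (y#ys)).
        \<Sum>w2\<leftarrow>shuffle (drop i xs) (drop j (y#ys)). F (x#w1) w2)"
    using "3.IH"(1)[of "\<lambda>a b. F (x#a) b"] by simp
  have IHB: "(\<Sum>w\<leftarrow>shuffle (x#xs) ys. \<Sum>i\<le>length w. F (y # take i w) (drop i w)) =
     (\<Sum>i\<le>length (x#xs). \<Sum>j\<le>length ys. \<Sum>w1\<leftarrow>shuffle (take i (x#xs)) (take j ys).
        \<Sum>w2\<leftarrow>shuffle (drop i (x#xs)) (drop j ys). F (y#w1) w2)"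
    using "3.IH"(2)[of "\<lambda>a b. F (y#a) b"] by simp
  have L: "(\<Sum>w\<leftarrow>shuffle (x#xs) (y#ys). \<Sum>i\<le>length w. F (take i w) (drop i w)) =
      (\<Sum>w\<leftarrow>shuffle (x#xs) (y#ys). F [] w)
    + (\<Sum>w\<leftarrow>shuffle xs (y#ys). \<Sum>i\<le>length w. F (x # take i w) (drop i w))
    + (\<Sum>w\<leftarrow>shuffle (x#xs) ys. \<Sum>i\<le>length w. F (y # take i w) (drop i w))"
  proof -
    define G where "G w = (\<Sum>i\<le>length w. F (take i w) (drop i w))" for w
    have "(\<Sum>w\<leftarrow>shuffle (x#xs) (y#ys). G w) = (\<Sum>w\<leftarrow>shuffle xs (y#ys). G (x#w)) + (\<Sum>w\<leftarrow>shuffle (x#xs) ys. G (y#w))"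
      by (simp add: comp_def)
    also have "\<dots> = (\<Sum>w\<leftarrow>shuffle xs (y#ys). F [] (x#w) + (\<Sum>i\<le>length w. F (x#take i w) (drop i w)))
       + (\<Sum>w\<leftarrow>shuffle (x#xs) ys. F [] (y#w) + (\<Sum>i\<le>length w. F (y#take i w) (drop i w)))"
      unfolding G_def sum_takedrop_Cons by (rule refl)
    also have "\<dots> = (\<Sum>w\<leftarrow>shuffle (x#xs) (y#ys). F [] w)
    + (\<Sum>w\<leftarrow>shuffle xs (y#ys). \<Sum>i\<le>length w. F (x # take i w) (drop i w))
    + (\<Sum>w\<leftarrow>shuffle (x#xs) ys. \<Sum>i\<le>length w. F (y # take i w) (drop i w))"
      by (simp only: sum_list_addf) (simp add: comp_def add_ac)
    finally show ?thesis unfolding G_def .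
  qed
  have RHS: "(\<Sum>i\<le>length (x#xs). \<Sum>j\<le>length (y#ys). R i j) =
     R 0 0 + (\<Sum>j\<le>length ys. R 0 (Suc j)) + (\<Sum>i\<le>length xs. R (Suc i) 0)
     + (\<Sum>i\<le>length xs. \<Sum>j\<le>length ys. R (Suc i) (Suc j))"
    unfolding length_Cons atMost_Suc_split by (simp add: sum.distrib add_ac del: sum.atMost_Suc)
  have A: "(\<Sum>i\<le>length xs. \<Sum>j\<le>length (y#ys). \<Sum>w1\<leftarrow>shuffle (take i xs) (take j (y#ys)).
        \<Sum>w2\<leftarrow>shuffle (drop i xs) (drop j (y#ys)). F (x#w1) w2)
     = (\<Sum>i\<le>length xs. R (Suc i) 0) + (\<Sum>i\<le>length xs. \<Sum>j\<le>length ys.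
        \<Sum>w1\<leftarrow>shuffle (take i xs) (take (Suc j) (y#ys)). \<Sum>w2\<leftarrow>shuffle (drop i xs) (drop (Suc j) (y#ys)). F (x#w1) w2)"
    unfolding length_Cons atMost_Suc_split by (simp add: sum.distrib R_def del: sum.atMost_Suc)
  have B: "(\<Sum>i\<le>length (x#xs). \<Sum>j\<le>length ys. \<Sum>w1\<leftarrow>shuffle (take i (x#xs)) (take j ys).
        \<Sum>w2\<leftarrow>shuffle (drop i (x#xs)) (drop j ys). F (y#w1) w2)
     = (\<Sum>j\<le>length ys. R 0 (Suc j)) + (\<Sum>i\<le>length xs. \<Sum>j\<le>length ys.
        \<Sum>w1\<leftarrow>shuffle (take (Suc i) (x#xs)) (take j ys). \<Sum>w2\<leftarrow>shuffle (drop (Suc i) (x#xs)) (drop j ys). F (y#w1) w2)"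
    unfolding length_Cons atMost_Suc_split by (simp add: sum.distrib R_def del: sum.atMost_Suc)
  show ?case
    unfolding L IHA IHB A B
    using RHS r00 by (simp add: R_def[symmetric] rSS sum.distrib add_ac)
qed

fun cuts :: "'b list list \<Rightarrow> nat list list" where
  "cuts [] = [[]]"
| "cuts (t # ts) = map (\<lambda>(i, c). i # c) (List.product [0..<Suc (length t)] (cuts ts))"

lemma sum_list_concat_map:
  "(\<Sum>w\<leftarrow>concat (map g xs). f w) = (\<Sum>x\<leftarrow>xs. \<Sum>w\<leftarrow>g x. (f w :: 'c::comm_monoid_add))"
  by (induction xs) auto

lemma sum_list_upt_atMost:
  "(\<Sum>i\<leftarrow>[0..<Suc n]. f i) = (\<Sum>i\<le>n. (f i :: 'c::comm_monoid_add))"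
  by (simp only: lessThan_Suc_atMost[symmetric] atLeast_upt sum_list_distinct_conv_sum_set distinct_upt)

lemma sum_list_product:
  "(\<Sum>p\<leftarrow>List.product xs ys. f p) = (\<Sum>x\<leftarrow>xs. \<Sum>y\<leftarrow>ys. (f (x, y) :: 'c::comm_monoid_add))"
  by (induction xs) (auto simp: comp_def)

lemma deltaM:
  "(\<Sum>w\<leftarrow>shuffle_many ts. \<Sum>i\<le>length w. F (take i w) (drop i w)) =
   (\<Sum>c\<leftarrow>cuts ts. \<Sum>w1\<leftarrow>shuffle_many (map2 take c ts).
        \<Sum>w2\<leftarrow>shuffle_many (map2 drop c ts). (F w1 w2 :: 'c::comm_monoid_add))"
proof (induction ts arbitrary: F)
  case Nil
  then show ?case by simp
next
  case (Cons t ts)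
  define G where "G i a b = (\<Sum>w1\<leftarrow>shuffle (take i t) a. \<Sum>w2\<leftarrow>shuffle (drop i t) b. F w1 w2)" for i a b
  have "(\<Sum>w\<leftarrow>shuffle_many (t#ts). \<Sum>i\<le>length w. F (take i w) (drop i w))
     = (\<Sum>x\<leftarrow>shuffle_many ts. \<Sum>w\<leftarrow>shuffle t x. \<Sum>i\<le>length w. F (take i w) (drop i w))"
    by (simp add: sum_list_concat_map)
  also have "\<dots> = (\<Sum>x\<leftarrow>shuffle_many ts. \<Sum>i\<le>length t. \<Sum>j\<le>length x. G i (take j x) (drop j x))"
    unfolding delta2 G_def by (rule refl)
  also have "\<dots> = (\<Sum>i\<le>length t. \<Sum>x\<leftarrow>shuffle_many ts. \<Sum>j\<le>length x. G i (take j x) (drop j x))"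
    by (rule sum_list_sum_swap)
  also have "\<dots> = (\<Sum>i\<le>length t. \<Sum>c\<leftarrow>cuts ts. \<Sum>a\<leftarrow>shuffle_many (map2 take c ts).
        \<Sum>b\<leftarrow>shuffle_many (map2 drop c ts). G i a b)"
    using Cons.IH by simp
  also have "\<dots> = (\<Sum>c\<leftarrow>cuts (t#ts). \<Sum>w1\<leftarrow>shuffle_many (map2 take c (t#ts)).
        \<Sum>w2\<leftarrow>shuffle_many (map2 drop c (t#ts)). F w1 w2)"
  proof -
    have "(\<Sum>w1\<leftarrow>shuffle_many (take i t # map2 take c ts). \<Sum>w2\<leftarrow>shuffle_many (drop i t # map2 drop c ts). F w1 w2)
      = (\<Sum>a\<leftarrow>shuffle_many (map2 take c ts). \<Sum>b\<leftarrow>shuffle_many (map2 drop c ts). G i a b)" for i c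
      unfolding G_def shuffle_many.simps sum_list_concat_map
      by (subst sum_list_swap) (rule refl)
    hence "(\<Sum>c\<leftarrow>cuts (t#ts). \<Sum>w1\<leftarrow>shuffle_many (map2 take c (t#ts)).
        \<Sum>w2\<leftarrow>shuffle_many (map2 drop c (t#ts)). F w1 w2)
      = (\<Sum>i\<leftarrow>[0..<Suc (length t)]. \<Sum>c\<leftarrow>cuts ts. \<Sum>a\<leftarrow>shuffle_many (map2 take c ts).
        \<Sum>b\<leftarrow>shuffle_many (map2 drop c ts). G i a b)"
      by (simp only: cuts.simps map_map sum_list_product comp_def case_prod_conv zip_Cons_Cons list.map)
    then show ?thesis by (simp only: sum_list_upt_atMost)
  qed
  finally show ?case .
qed



definition fnset :: "nat \<Rightarrow> 'b list list \<Rightarrow> (nat \<times> nat \<Rightarrow> nat) set" where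
  "fnset n ts = {f \<in> word_poset ts \<rightarrow>\<^sub>E {1..n}. order_pres (word_poset ts) f}"

definition blk :: "'b list list \<Rightarrow> (nat \<times> nat \<Rightarrow> nat) \<Rightarrow> nat \<Rightarrow> 'b list list" where
  "blk ts f m = map (\<lambda>j. map (\<lambda>q. ts!j!q) (filter (\<lambda>q. f (j,q) = m) [0..<length (ts!j)])) [0..<length ts]"

definition cutset :: "'b list list \<Rightarrow> nat list set" where
  "cutset ts = {c. length c = length ts \<and> (\<forall>j<length ts. c!j \<le> length (ts!j))}"

lemma set_cuts: "set (cuts ts) = cutset ts"
proof (induction ts)
  case Nil
  then show ?case by (auto simp: cutset_def)
next
  case (Cons t ts)
  show ?case
  proof (intro set_eqI iffI)
    fix c assume "c \<in> set (cuts (t#ts))"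
    then show "c \<in> cutset (t#ts)" using Cons
      by (auto simp: cutset_def nth_Cons split: nat.splits)
  next
    fix c assume c: "c \<in> cutset (t#ts)"
    then obtain i c' where cc: "c = i # c'"
      by (cases c) (auto simp: cutset_def)
    have "i \<le> length t" "c' \<in> cutset ts"
      using c unfolding cc cutset_def by (auto dest: spec[of _ 0] spec[of _ "Suc _"])
    then show "c \<in> set (cuts (t#ts))" using Cons cc
      by (auto simp: image_iff)
  qed
qed

lemma distinct_cuts: "distinct (cuts ts)"
proof (induction ts)
  case Nil then show ?case by simp
next
  case (Cons t ts)
  have "inj_on (\<lambda>(i, c). i # c) (set (List.product [0..<Suc (length t)] (cuts ts)))"
    by (auto simp: inj_on_def)
  then show ?case using Cons by (simp add: distinct_map distinct_product)
qed

lemma sum_cuts: "(\<Sum>c\<leftarrow>cuts ts. h c) = (\<Sum>c\<in>cutset ts. h c)"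
  by (simp add: sum_list_distinct_conv_sum_set distinct_cuts set_cuts)

lemma finite_cutset: "finite (cutset ts)"
  using set_cuts[of ts] by (metis List.finite_set)

lemma pair_words_tprod:
  "pair_words (tprod a b) (shuffle_many ts) =
   (\<Sum>c\<in>cutset ts. pair_words a (shuffle_many (map2 take c ts)) * pair_words b (shuffle_many (map2 drop c ts)))"
proof -
  have "pair_words (tprod a b) (shuffle_many ts) =
    (\<Sum>c\<leftarrow>cuts ts. \<Sum>w1\<leftarrow>shuffle_many (map2 take c ts). \<Sum>w2\<leftarrow>shuffle_many (map2 drop c ts). a w1 * b w2)"
    unfolding pair_words_def tprod_def using deltaM[of "\<lambda>u v. a u * b v"] by simp
  also have "\<dots> = (\<Sum>c\<leftarrow>cuts ts. pair_words a (shuffle_many (map2 take c ts)) * pair_words b (shuffle_many (map2 drop c ts)))"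
    by (simp add: pair_words_def sum_list_const_mult sum_list_mult_const)
  finally show ?thesis by (simp add: sum_cuts)
qed

lemma length_map2_drop: "c \<in> cutset ts \<Longrightarrow> length (map2 drop c ts) = length ts"
  by (simp add: cutset_def)
lemma length_map2_take: "c \<in> cutset ts \<Longrightarrow> length (map2 take c ts) = length ts"
  by (simp add: cutset_def)
lemma nth_map2_drop: "c \<in> cutset ts \<Longrightarrow> j < length ts \<Longrightarrow> map2 drop c ts ! j = drop (c!j) (ts!j)"
  by (simp add: cutset_def)
lemma nth_map2_take: "c \<in> cutset ts \<Longrightarrow> j < length ts \<Longrightarrow> map2 take c ts ! j = take (c!j) (ts!j)"
  by (simp add: cutset_def)

lemma word_poset_drop: "c \<in> cutset ts \<Longrightarrow>
   word_poset (map2 drop c ts) = {(j,q). j < length ts \<and> q + c!j < length (ts!j)}"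
  by (auto simp: word_poset_def cutset_def)



definition Phi :: "'b list list \<Rightarrow> nat list \<Rightarrow> (nat \<times> nat \<Rightarrow> nat) \<Rightarrow> nat \<times> nat \<Rightarrow> nat" where
  "Phi ts c g = (\<lambda>(j,q). if (j,q) \<in> word_poset ts then (if q < c!j then 1 else Suc (g (j, q - c!j))) else undefined)"

definition cutv :: "'b list list \<Rightarrow> (nat \<times> nat \<Rightarrow> nat) \<Rightarrow> nat list" where
  "cutv ts f = map (\<lambda>j. card {q. q < length (ts!j) \<and> f (j,q) = 1}) [0..<length ts]"

definition psig :: "'b list list \<Rightarrow> (nat \<times> nat \<Rightarrow> nat) \<Rightarrow> nat list \<Rightarrow> nat \<times> nat \<Rightarrow> nat" where
  "psig ts f c = (\<lambda>(j,q). if (j,q) \<in> word_poset (map2 drop c ts) then f (j, q + c!j) - 1 else undefined)"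

lemma downclosed:
  assumes "A \<subseteq> {..<N}" "\<And>q q'. q \<in> A \<Longrightarrow> q' \<le> q \<Longrightarrow> q' \<in> A"
  shows "A = {..<card A}"
proof (cases "A = {}")
  case True then show ?thesis by simp
next
  case False
  have fin: "finite A" using assms(1) finite_subset by blast
  define m where "m = Max A"
  have "m \<in> A" using fin False m_def by simp
  have "A = {..m}"
    using assms(2)[OF \<open>m \<in> A\<close>] Max_ge[OF fin] m_def by auto
  then show ?thesis by (simp add: lessThan_Suc_atMost[symmetric])
qed

lemma fnsetD:
  assumes "f \<in> fnset n ts" "(j,q) \<in> word_poset ts"
  shows "f (j,q) \<in> {1..n}"
  using assms by (auto simp: fnset_def)

lemma fnset_mono:
  assumes "f \<in> fnset n ts" "(j,q') \<in> word_poset ts" "q \<le> q'"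
  shows "f (j,q) \<le> f (j,q')"
proof -
  have "(j,q) \<in> word_poset ts" using assms(2,3) by (auto simp: word_poset_def)
  then show ?thesis using assms by (auto simp: fnset_def order_pres_def)
qed

lemma Phi_in:
  assumes c: "c \<in> cutset ts" and g: "g \<in> fnset n (map2 drop c ts)"
  shows "Phi ts c g \<in> fnset (Suc n) ts"
proof -
  have gP: "g (j, q - c!j) \<in> {1..n}" if "(j,q) \<in> word_poset ts" "\<not> q < c!j" for j q
  proof -
    have "(j, q - c!j) \<in> word_poset (map2 drop c ts)"
      unfolding word_poset_drop[OF c] using that by (auto simp: word_poset_def)
    then show ?thesis by (rule fnsetD[OF g])
  qed
  have "Phi ts c g \<in> word_poset ts \<rightarrow>\<^sub>E {1..Suc n}"
    using gP by (auto simp: Phi_def PiE_def extensional_def)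
  moreover have "order_pres (word_poset ts) (Phi ts c g)"
    unfolding order_pres_def
  proof (intro allI impI)
    fix j q q' assume h: "(j, q) \<in> word_poset ts \<and> (j, q') \<in> word_poset ts \<and> q \<le> q'"
    show "Phi ts c g (j, q) \<le> Phi ts c g (j, q')"
    proof (cases "q' < c!j")
      case True
      then have "q < c!j" using h by linarith
      then show ?thesis using h True by (simp add: Phi_def)
    next
      case False
      have "(j, q' - c!j) \<in> word_poset (map2 drop c ts)"
        unfolding word_poset_drop[OF c] using h False by (auto simp: word_poset_def)
      then have le: "g (j, q - c!j) \<le> g (j, q' - c!j)" if "\<not> q < c!j"
        using fnset_mono[OF g, of j "q' - c!j" "q - c!j"] h that by auto
      show ?thesis
      proof (cases "q < c!j")
        case True
        then show ?thesis using h False by (simp add: Phi_def)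
      next
        case F2: False
        then show ?thesis using h False le by (simp add: Phi_def)
      qed
    qed
  qed
  ultimately show ?thesis by (simp add: fnset_def)
qed

lemma Phi_eq1:
  assumes c: "c \<in> cutset ts" and g: "g \<in> fnset n (map2 drop c ts)" and P: "(j,q) \<in> word_poset ts"
  shows "Phi ts c g (j,q) = 1 \<longleftrightarrow> q < c!j"
proof (cases "q < c!j")
  case False
  have "(j, q - c!j) \<in> word_poset (map2 drop c ts)"
    unfolding word_poset_drop[OF c] using P False by (auto simp: word_poset_def)
  then have "g (j, q - c!j) \<ge> 1" using fnsetD[OF g] by auto
  then show ?thesis using P False by (simp add: Phi_def)
qed (use P in \<open>simp add: Phi_def\<close>)

lemma Phi_inj:
  "inj_on (\<lambda>(c,g). Phi ts c g) (SIGMA c:cutset ts. fnset n (map2 drop c ts))"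
proof (rule inj_onI, clarify)
  fix c g c' g'
  assume c: "c \<in> cutset ts" and g: "g \<in> fnset n (map2 drop c ts)"
    and c': "c' \<in> cutset ts" and g': "g' \<in> fnset n (map2 drop c' ts)"
    and eq: "Phi ts c g = Phi ts c' g'"
  have cj: "c!j = c'!j" if j: "j < length ts" for j
  proof (rule ccontr)
    assume ne: "c!j \<noteq> c'!j"
    define q where "q = min (c!j) (c'!j)"
    have "c!j \<le> length (ts!j)" "c'!j \<le> length (ts!j)" using c c' j by (auto simp: cutset_def)
    then have P: "(j,q) \<in> word_poset ts" using ne j by (auto simp: q_def word_poset_def)
    have "(q < c!j) \<longleftrightarrow> (q < c'!j)"
      using Phi_eq1[OF c g P] Phi_eq1[OF c' g' P] eq by simp
    then show False using ne by (auto simp: q_def)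
  qed
  have cc: "c = c'" using c c' cj by (auto simp: cutset_def intro: nth_equalityI)
  have "g x = g' x" for x
  proof (cases "x \<in> word_poset (map2 drop c ts)")
    case True
    obtain j q where x: "x = (j,q)" by (cases x)
    have P: "(j, q + c!j) \<in> word_poset ts" and j: "j < length ts"
      using True c by (auto simp: x word_poset_drop word_poset_def)
    have "Phi ts c g (j, q + c!j) = Suc (g x)" "Phi ts c' g' (j, q + c!j) = Suc (g' x)"
      using P cc by (auto simp: Phi_def x)
    then show ?thesis using eq by simp
  next
    case False
    then show ?thesis using g g' cc by (cases x) (auto simp: fnset_def PiE_def extensional_def)
  qed
  then show "c = c' \<and> g = g'" using cc by auto
qed

lemma cutv_props:
  assumes f: "f \<in> fnset (Suc n) ts" and j: "j < length ts"
  shows "cutv ts f ! j \<le> length (ts!j)"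
    and "q < length (ts!j) \<Longrightarrow> f (j,q) = 1 \<longleftrightarrow> q < cutv ts f ! j"
proof -
  define A where "A = {q. q < length (ts!j) \<and> f (j,q) = 1}"
  have dc: "q' \<in> A" if "q \<in> A" "q' \<le> q" for q q'
  proof -
    have P: "(j,q) \<in> word_poset ts" "(j,q') \<in> word_poset ts"
      using that j by (auto simp: A_def word_poset_def)
    have "f (j,q') \<le> f (j,q)" using fnset_mono[OF f P(1) that(2)] .
    moreover have "f (j,q') \<ge> 1" using fnsetD[OF f P(2)] by simp
    ultimately show ?thesis using that P by (auto simp: A_def word_poset_def)
  qed
  have sub: "A \<subseteq> {..<length (ts!j)}" by (auto simp: A_def)
  have A: "A = {..<card A}" by (rule downclosed[OF sub dc])
  have cv: "cutv ts f ! j = card A" using j by (simp add: cutv_def A_def)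
  have "card A \<le> length (ts!j)"
    using card_mono[of "{..<length (ts!j)}" A] by (auto simp: A_def)
  then show "cutv ts f ! j \<le> length (ts!j)" using cv by simp
  show "f (j,q) = 1 \<longleftrightarrow> q < cutv ts f ! j" if "q < length (ts!j)"
    using that A cv by (auto simp: A_def)
qed

lemma cutv_in: assumes f: "f \<in> fnset (Suc n) ts" shows "cutv ts f \<in> cutset ts"
proof -
  have "\<forall>j<length ts. cutv ts f ! j \<le> length (ts!j)" using cutv_props(1)[OF f] by blast
  then show ?thesis unfolding cutset_def by (simp add: cutv_def)
qed

lemma psig_in:
  assumes f: "f \<in> fnset (Suc n) ts"
  shows "psig ts f (cutv ts f) \<in> fnset n (map2 drop (cutv ts f) ts)"
proof -
  let ?c = "cutv ts f"
  have c: "?c \<in> cutset ts" by (rule cutv_in[OF f])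
  have val: "f (j, q + ?c!j) \<in> {2..Suc n}" if "(j,q) \<in> word_poset (map2 drop ?c ts)" for j q
  proof -
    have P: "(j, q + ?c!j) \<in> word_poset ts" and j: "j < length ts"
      using that c by (auto simp: word_poset_drop word_poset_def)
    have "f (j, q + ?c!j) \<noteq> 1" using cutv_props(2)[OF f j, of "q + ?c!j"] P by (auto simp: word_poset_def)
    then show ?thesis using fnsetD[OF f P] by auto
  qed
  have "psig ts f ?c \<in> word_poset (map2 drop ?c ts) \<rightarrow>\<^sub>E {1..n}"
    using val by (fastforce simp: psig_def PiE_def extensional_def)
  moreover have "order_pres (word_poset (map2 drop ?c ts)) (psig ts f ?c)"
    unfolding order_pres_def
  proof (intro allI impI)
    fix j q q' assume h: "(j, q) \<in> word_poset (map2 drop ?c ts) \<and> (j, q') \<in> word_poset (map2 drop ?c ts) \<and> q \<le> q'"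
    have P: "(j, q' + ?c!j) \<in> word_poset ts"
      using h c by (auto simp: word_poset_drop word_poset_def)
    have "f (j, q + ?c!j) \<le> f (j, q' + ?c!j)" using fnset_mono[OF f P] h by simp
    then show "psig ts f ?c (j, q) \<le> psig ts f ?c (j, q')"
      using h by (simp add: psig_def)
  qed
  ultimately show ?thesis by (simp add: fnset_def)
qed

lemma Phi_psig:
  assumes f: "f \<in> fnset (Suc n) ts"
  shows "Phi ts (cutv ts f) (psig ts f (cutv ts f)) = f"
proof (rule ext)
  fix x :: "nat \<times> nat"
  obtain j q where x: "x = (j,q)" by (cases x)
  let ?c = "cutv ts f"
  have c: "?c \<in> cutset ts" by (rule cutv_in[OF f])
  show "Phi ts ?c (psig ts f ?c) x = f x"
  proof (cases "x \<in> word_poset ts")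
    case True
    then have j: "j < length ts" and q: "q < length (ts!j)" by (auto simp: x word_poset_def)
    show ?thesis
    proof (cases "q < ?c!j")
      case True
      then show ?thesis using cutv_props(2)[OF f j q] \<open>x \<in> word_poset ts\<close> by (simp add: x Phi_def)
    next
      case False
      have P': "(j, q - ?c!j) \<in> word_poset (map2 drop ?c ts)"
        using False c j q by (simp add: word_poset_drop)
      have "f (j,q) \<noteq> 1" using cutv_props(2)[OF f j q] False by simp
      moreover have "f (j,q) \<ge> 1" using fnsetD[OF f True[unfolded x]] by simp
      ultimately show ?thesis using False P' True by (simp add: x Phi_def psig_def)
    qed
  next
    case False
    then show ?thesis using f by (auto simp: x Phi_def fnset_def PiE_def extensional_def)
  qed
qed

lemma Phi_image:
  "(\<lambda>(c,g). Phi ts c g) ` (SIGMA c:cutset ts. fnset n (map2 drop c ts)) = fnset (Suc n) ts"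
proof (intro set_eqI iffI)
  fix f assume "f \<in> (\<lambda>(c,g). Phi ts c g) ` (SIGMA c:cutset ts. fnset n (map2 drop c ts))"
  then show "f \<in> fnset (Suc n) ts" using Phi_in by auto
next
  fix f assume f: "f \<in> fnset (Suc n) ts"
  show "f \<in> (\<lambda>(c,g). Phi ts c g) ` (SIGMA c:cutset ts. fnset n (map2 drop c ts))"
    using Phi_psig[OF f] cutv_in[OF f] psig_in[OF f]
    by (intro image_eqI[of _ _ "(cutv ts f, psig ts f (cutv ts f))"]) auto
qed



lemma prod_split1:
  "(\<Prod>m\<in>{1..Suc n}. a m) = a 1 * (\<Prod>m\<in>{1..n}. a (Suc m))"
proof -
  have e: "{1..Suc n} = insert 1 (Suc ` {1..n})"
    by (auto simp: image_iff)
  have "(\<Prod>m\<in>{1..Suc n}. a m) = a 1 * (\<Prod>m\<in>Suc ` {1..n}. a m)"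
    unfolding e by (subst prod.insert) auto
  also have "\<dots> = a 1 * (\<Prod>m\<in>{1..n}. a (Suc m))"
    by (subst prod.reindex) auto
  finally show ?thesis .
qed

lemma finite_word_poset: "finite (word_poset ts)"
proof -
  have "word_poset ts = (SIGMA j:{..<length ts}. {..<length (ts!j)})"
    by (auto simp: word_poset_def)
  then show ?thesis by simp
qed

lemma finite_fnset: "finite (fnset n ts)"
proof -
  have "finite (word_poset ts \<rightarrow>\<^sub>E {1..n})" by (rule finite_PiE) (auto simp: finite_word_poset)
  then show ?thesis unfolding fnset_def by (rule finite_subset[rotated]) auto
qed

lemma filter_lt_upt: "c \<le> n \<Longrightarrow> filter (\<lambda>q. q < c) [0..<n] = [0..<c]"
proof -
  assume "c \<le> n"
  then have "[0..<n] = [0..<c] @ [c..<n]"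
    by (metis le_add_diff_inverse upt_add_eq_append zero_le)
  then show ?thesis by (simp add: filter_id_conv)
qed

lemma map_nth_upt_take: "c \<le> length t \<Longrightarrow> map (\<lambda>q. t!q) [0..<c] = take c t"
  by (rule nth_equalityI) auto

lemma blk_length: "length (blk ts f m) = length ts"
  by (simp add: blk_def)

lemma blk_nth: "j < length ts \<Longrightarrow> blk ts f m ! j =
   map (\<lambda>q. ts!j!q) (filter (\<lambda>q. f (j,q) = m) [0..<length (ts!j)])"
  by (simp add: blk_def)

lemma blk_Phi_1:
  assumes c: "c \<in> cutset ts" and g: "g \<in> fnset n (map2 drop c ts)"
  shows "blk ts (Phi ts c g) 1 = map2 take c ts"
proof (rule nth_equalityI)
  show "length (blk ts (Phi ts c g) 1) = length (map2 take c ts)"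
    using c by (simp add: blk_length cutset_def)
next
  fix j assume "j < length (blk ts (Phi ts c g) 1)"
  then have j: "j < length ts" by (simp add: blk_length)
  have cj: "c!j \<le> length (ts!j)" using c j by (simp add: cutset_def)
  have "filter (\<lambda>q. Phi ts c g (j,q) = 1) [0..<length (ts!j)] = filter (\<lambda>q. q < c!j) [0..<length (ts!j)]"
    by (rule filter_cong) (use Phi_eq1[OF c g] j in \<open>auto simp: word_poset_def\<close>)
  then show "blk ts (Phi ts c g) 1 ! j = map2 take c ts ! j"
    using j cj by (simp add: blk_nth nth_map2_take[OF c j] filter_lt_upt map_nth_upt_take)
qed

lemma blk_Phi_Suc:
  assumes c: "c \<in> cutset ts" and g: "g \<in> fnset n (map2 drop c ts)" and m: "m \<ge> 1"
  shows "blk ts (Phi ts c g) (Suc m) = blk (map2 drop c ts) g m"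
proof (rule nth_equalityI)
  show "length (blk ts (Phi ts c g) (Suc m)) = length (blk (map2 drop c ts) g m)"
    using c by (simp add: blk_length cutset_def)
next
  fix j assume "j < length (blk ts (Phi ts c g) (Suc m))"
  then have j: "j < length ts" by (simp add: blk_length)
  define cj where "cj = c!j"
  define L where "L = length (ts!j)"
  have cjL: "cj \<le> L" using c j by (simp add: cutset_def cj_def L_def)
  have split: "[0..<L] = [0..<cj] @ map (\<lambda>i. i + cj) [0..<L - cj]"
    using cjL by (simp add: map_add_upt) (metis le_add_diff_inverse upt_add_eq_append zero_le)
  have f1: "filter (\<lambda>q. Phi ts c g (j,q) = Suc m) [0..<cj] = []"
    using j cjL m by (auto simp: filter_empty_conv Phi_def word_poset_def cj_def L_def)
  have f2: "filter (\<lambda>q. Phi ts c g (j,q) = Suc m) (map (\<lambda>i. i + cj) [0..<L - cj])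
      = map (\<lambda>i. i + cj) (filter (\<lambda>i. g (j,i) = m) [0..<L - cj])"
    unfolding filter_map
    by (rule arg_cong[where f="map _"], rule filter_cong)
       (use j in \<open>auto simp: Phi_def word_poset_def cj_def L_def\<close>)
  have "blk ts (Phi ts c g) (Suc m) ! j =
     map (\<lambda>i. ts!j!(i + cj)) (filter (\<lambda>i. g (j,i) = m) [0..<L - cj])"
    using j by (simp add: blk_nth L_def[symmetric] split f1 f2)
  also have "\<dots> = map (\<lambda>i. drop cj (ts!j) ! i) (filter (\<lambda>i. g (j,i) = m) [0..<L - cj])"
    by (rule map_cong) (use cjL in \<open>auto simp: L_def add.commute\<close>)
  also have "\<dots> = blk (map2 drop c ts) g m ! j"
  proof -
    have jj: "j < length (map2 drop c ts)" using j c by (simp add: cutset_def)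
    show ?thesis by (simp only: blk_nth[OF jj] nth_map2_drop[OF c j] length_drop cj_def L_def)
  qed
  finally show "blk ts (Phi ts c g) (Suc m) ! j = blk (map2 drop c ts) g m ! j" .
qed

lemma sum_list_zero': "(\<And>w. w \<in> set ws \<Longrightarrow> f w = 0) \<Longrightarrow> (\<Sum>w\<leftarrow>ws. f w) = (0::'c::comm_monoid_add)"
  by (induction ws) auto

lemma word_poset_empty_iff: "word_poset ts = {} \<longleftrightarrow> (\<forall>t\<in>set ts. t = [])"
proof
  assume "word_poset ts = {}"
  show "\<forall>t\<in>set ts. t = []"
  proof
    fix t assume "t \<in> set ts"
    then obtain j where j: "j < length ts" "t = ts!j" by (auto simp: in_set_conv_nth)
    show "t = []"
    proof (rule ccontr)
      assume "t \<noteq> []"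
      then have "(j, 0) \<in> word_poset ts" using j by (auto simp: word_poset_def)
      then show False using \<open>word_poset ts = {}\<close> by simp
    qed
  qed
next
  assume "\<forall>t\<in>set ts. t = []"
  then show "word_poset ts = {}"
    unfolding word_poset_def using nth_mem by fastforce
qed

lemma tpow_shuffle:
  "pair_words (tpow y n) (shuffle_many ts) =
   (\<Sum>f\<in>fnset n ts. \<Prod>m\<in>{1..n}. pair_words y (shuffle_many (blk ts f m)))"
proof (induction n arbitrary: ts)
  case 0
  show ?case
  proof (cases "\<forall>t\<in>set ts. t = []")
    case True
    then have "word_poset ts = {}" by (simp add: word_poset_empty_iff)
    then have "fnset 0 ts = {\<lambda>_. undefined}" by (simp add: fnset_def order_pres_def)
    then show ?thesis using True by (simp add: shuffle_many_all_Nil pair_words_def tunit_def)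
  next
    case False
    then have ne: "word_poset ts \<noteq> {}" by (simp add: word_poset_empty_iff)
    then obtain x where x: "x \<in> word_poset ts" by blast
    have "fnset 0 ts = {}"
    proof (rule ccontr)
      assume "fnset 0 ts \<noteq> {}"
      then obtain f where "f \<in> word_poset ts \<rightarrow>\<^sub>E {1..0::nat}" by (auto simp: fnset_def)
      then have "f x \<in> {1..0::nat}" using x by (rule PiE_mem)
      then show False by simp
    qed
    moreover have "pair_words tunit (shuffle_many ts) = 0"
      unfolding pair_words_def
    proof (rule sum_list_zero')
      fix w assume "w \<in> set (shuffle_many ts)"
      then have "length w = sum_list (map length ts)" by (rule shuffle_many_length)
      moreover obtain t where "t \<in> set ts" "t \<noteq> []" using False by blast
      moreover have "length t \<le> sum_list (map length ts)"
        using \<open>t \<in> set ts\<close> by (intro member_le_sum_list) auto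
      ultimately have "w \<noteq> []" by auto
      then show "tunit w = 0" by (simp add: tunit_def)
    qed
    ultimately show ?thesis by simp
  qed
next
  case (Suc n)
  define H where "H f = (\<Prod>m\<in>{1..Suc n}. pair_words y (shuffle_many (blk ts f m)))" for f
  define S where "S = (SIGMA c:cutset ts. fnset n (map2 drop c ts))"
  have "pair_words (tpow y (Suc n)) (shuffle_many ts) =
    (\<Sum>c\<in>cutset ts. pair_words y (shuffle_many (map2 take c ts)) * pair_words (tpow y n) (shuffle_many (map2 drop c ts)))"
    by (simp add: pair_words_tprod)
  also have "\<dots> = (\<Sum>c\<in>cutset ts. \<Sum>g\<in>fnset n (map2 drop c ts). H (Phi ts c g))"
  proof (rule sum.cong[OF refl])
    fix c assume c: "c \<in> cutset ts"
    show "pair_words y (shuffle_many (map2 take c ts)) * pair_words (tpow y n) (shuffle_many (map2 drop c ts)) =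
      (\<Sum>g\<in>fnset n (map2 drop c ts). H (Phi ts c g))"
      unfolding Suc.IH sum_distrib_left
    proof (rule sum.cong[OF refl])
      fix g assume g: "g \<in> fnset n (map2 drop c ts)"
      have eqp: "(\<Prod>m\<in>{1..n}. pair_words y (shuffle_many (blk (map2 drop c ts) g m))) =
            (\<Prod>m\<in>{1..n}. pair_words y (shuffle_many (blk ts (Phi ts c g) (Suc m))))"
        by (rule prod.cong[OF refl]) (simp add: blk_Phi_Suc[OF c g])
      show "pair_words y (shuffle_many (map2 take c ts)) *
         (\<Prod>m\<in>{1..n}. pair_words y (shuffle_many (blk (map2 drop c ts) g m))) = H (Phi ts c g)"
        unfolding H_def prod_split1 blk_Phi_1[OF c g] eqp by (rule refl)
    qed
  qed
  also have "\<dots> = (\<Sum>(c,g)\<in>S. H (Phi ts c g))"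
    unfolding S_def by (rule sum.Sigma) (auto simp: finite_cutset finite_fnset)
  also have "\<dots> = (\<Sum>p\<in>S. (H \<circ> (\<lambda>(c,g). Phi ts c g)) p)"
    by (rule sum.cong) auto
  also have "\<dots> = (\<Sum>f\<in>(\<lambda>(c,g). Phi ts c g) ` S. H f)"
    unfolding S_def by (rule sum.reindex[symmetric]) (rule Phi_inj)
  also have "\<dots> = (\<Sum>f\<in>fnset (Suc n) ts. H f)"
    unfolding S_def Phi_image ..
  finally show ?case unfolding H_def .
qed



lemma tpow_zero:
  assumes y0: "y [] = 0"
  shows "length w < n \<Longrightarrow> tpow y n w = 0"
proof (induction n arbitrary: w)
  case 0 then show ?case by simp
next
  case (Suc n)
  have "tpow y (Suc n) w = (\<Sum>i\<le>length w. y (take i w) * tpow y n (drop i w))"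
    by (simp add: tprod_def)
  also have "\<dots> = 0"
  proof (rule sum.neutral, intro ballI)
    fix i assume "i \<in> {..length w}"
    show "y (take i w) * tpow y n (drop i w) = 0"
    proof (cases "i = 0")
      case True then show ?thesis by (simp add: y0)
    next
      case False
      then have "length (drop i w) < n" using Suc.prems \<open>i \<in> {..length w}\<close> by simp
      then show ?thesis using Suc.IH by simp
    qed
  qed
  finally show ?case .
qed

lemma tlog_trunc:
  assumes y0: "y [] = 1" and len: "length w \<le> N"
  shows "tlog y w = (\<Sum>n<N. (-1) ^ n / real (Suc n) * tpow (\<lambda>v. y v - tunit v) (Suc n) w)"
  unfolding tlog_def
proof (rule suminf_finite)
  fix n assume "n \<notin> {..<N}"
  then have "length w < Suc n" using len by simp
  have z: "(\<lambda>v. y v - tunit v) [] = 0" using y0 by (simp add: tunit_def)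
  show "(-1) ^ n / real (Suc n) * tpow (\<lambda>v. y v - tunit v) (Suc n) w = 0"
    using tpow_zero[of "\<lambda>v. y v - tunit v", OF z \<open>length w < Suc n\<close>] by simp
qed simp

lemma kernel_of_image: "kernel_of P f = (\<lambda>i. {x\<in>P. f x = i}) ` (f ` P)"
  by (auto simp: kernel_of_def)

lemma card_kernel:
  assumes "finite P"
  shows "card (kernel_of P f) = card (f ` P)"
proof -
  have "inj_on (\<lambda>i. {x\<in>P. f x = i}) (f ` P)"
    by (rule inj_onI) blast
  then show ?thesis by (simp add: kernel_of_image card_image)
qed

lemma card_word_poset: "card (word_poset ts) = sum_list (map length ts)"
proof -
  have "word_poset ts = (SIGMA j:{..<length ts}. {..<length (ts!j)})"
    by (auto simp: word_poset_def)
  then have "card (word_poset ts) = (\<Sum>j<length ts. length (ts!j))" by simp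
  also have "\<dots> = sum_list (map length ts)"
    by (simp add: sum_list_sum_nth atLeast0LessThan)
  finally show ?thesis .
qed

lemma finite_Orp: "finite (Orp ts)"
proof -
  have "Orp ts \<subseteq> Pow (Pow (word_poset ts))"
    by (auto simp: Orp_def kernel_of_def)
  then show ?thesis using finite_word_poset by (meson finite_Pow_iff finite_subset)
qed

lemma sorted_list_filter:
  "sorted_list_of_set {q. q < n \<and> P q} = filter P [0..<n]"
proof (rule sorted_distinct_set_unique)
  show "sorted (filter P [0..<n])" by (rule sorted_wrt_filter) simp
qed auto

lemma block_word_blk:
  assumes j: "j < length ts"
  shows "block_word ts {x \<in> word_poset ts. f x = m} j = blk ts f m ! j"
proof -
  have "{q. (j,q) \<in> {x \<in> word_poset ts. f x = m}} = {q. q < length (ts!j) \<and> f (j,q) = m}"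
    using j by (auto simp: word_poset_def)
  then show ?thesis using j by (simp add: block_word_def blk_nth sorted_list_filter)
qed



context
  fixes M :: "'a measure" and X :: "'a \<Rightarrow> real \<times> real \<Rightarrow> nat list \<Rightarrow> real" and d :: nat and T :: real
  assumes ps: "prob_space M"
    and S1: "\<And>\<omega>. \<omega> \<in> space M \<Longrightarrow> X \<omega> (0,T) [] = 1"
    and Ssh: "\<And>\<omega> u v. \<omega> \<in> space M \<Longrightarrow> is_word d u \<Longrightarrow> is_word d v \<Longrightarrow>
        pair_words (X \<omega> (0,T)) (shuffle u v) = X \<omega> (0,T) u * X \<omega> (0,T) v"
    and int: "\<And>\<sigma>. is_word d \<sigma> \<Longrightarrow> integrable M (\<lambda>\<omega>. X \<omega> (0,T) \<sigma>)"
begin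

lemma words_sm: "\<forall>u\<in>set us. is_word d u \<Longrightarrow> w \<in> set (shuffle_many us) \<Longrightarrow> is_word d w"
  using shuffle_many_set[of w us] by (auto simp: is_word_def)

lemma char_sm:
  assumes "\<omega> \<in> space M"
  shows "\<forall>u\<in>set us. is_word d u \<Longrightarrow> pair_words (X \<omega> (0,T)) (shuffle_many us) = prod_list (map (X \<omega> (0,T)) us)"
proof (induction us)
  case Nil
  then show ?case using S1[OF assms] by (simp add: pair_words_def)
next
  case (Cons u us)
  have "pair_words (X \<omega> (0,T)) (shuffle_many (u#us)) = (\<Sum>x\<leftarrow>shuffle_many us. pair_words (X \<omega> (0,T)) (shuffle u x))"
    by (simp add: pair_words_def sum_list_concat_map)
  also have "\<dots> = (\<Sum>x\<leftarrow>shuffle_many us. X \<omega> (0,T) u * X \<omega> (0,T) x)"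
    by (rule arg_cong[where f=sum_list], rule map_cong[OF refl], rule Ssh[OF assms])
       (use Cons.prems words_sm in auto)
  also have "\<dots> = X \<omega> (0,T) u * pair_words (X \<omega> (0,T)) (shuffle_many us)"
    by (simp add: pair_words_def sum_list_const_mult)
  finally show ?case using Cons by simp
qed

lemma pw_integral:
  "\<forall>w\<in>set ws. is_word d w \<Longrightarrow> integrable M (\<lambda>\<omega>. pair_words (X \<omega> (0,T)) ws) \<and>
     pair_words (exp_sig M X T) ws = integral\<^sup>L M (\<lambda>\<omega>. pair_words (X \<omega> (0,T)) ws)"
proof (induction ws)
  case Nil
  then show ?case by (simp add: pair_words_def)
next
  case (Cons w ws)
  then have iw: "integrable M (\<lambda>\<omega>. X \<omega> (0,T) w)" using int by simp
  from Cons show ?case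
    using iw by (simp add: pair_words_def exp_sig_def)
qed

lemma mu_nil: "exp_sig M X T [] = 1"
proof -
  have "exp_sig M X T [] = integral\<^sup>L M (\<lambda>_. 1::real)"
    unfolding exp_sig_def using S1 by (intro Bochner_Integration.integral_cong refl) auto
  also have "\<dots> = 1" using prob_space.prob_space[OF ps] by simp
  finally show ?thesis .
qed

lemma blk_words:
  assumes tw: "\<forall>t\<in>set ts. is_word d t" and u: "u \<in> set (blk ts f m)"
  shows "is_word d u"
proof -
  obtain j where j: "j < length ts" and uj: "u = map (\<lambda>q. ts!j!q) (filter (\<lambda>q. f (j,q) = m) [0..<length (ts!j)])"
    using u by (auto simp: blk_def)
  have "set u \<subseteq> set (ts!j)" using uj by auto
  moreover have "is_word d (ts!j)" using tw j by simp
  ultimately show ?thesis by (auto simp: is_word_def)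
qed

lemma Q_nonsurj:
  assumes f: "f \<in> fnset N ts" and ns: "f ` word_poset ts \<noteq> {1..N}"
  shows "(\<Prod>m\<in>{1..N}. pair_words (\<lambda>v. exp_sig M X T v - tunit v) (shuffle_many (blk ts f m))) = 0"
proof -
  have "f ` word_poset ts \<subseteq> {1..N}" using f by (auto simp: fnset_def)
  then obtain m where m: "m \<in> {1..N}" "m \<notin> f ` word_poset ts" using ns by blast
  have "\<forall>t\<in>set (blk ts f m). t = []"
  proof
    fix t assume "t \<in> set (blk ts f m)"
    then obtain j where j: "j < length ts" and tj: "t = map (\<lambda>q. ts!j!q) (filter (\<lambda>q. f (j,q) = m) [0..<length (ts!j)])"
      by (auto simp: blk_def)
    have "f (j,q) \<noteq> m" if "q < length (ts!j)" for q
    proof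
      assume "f (j,q) = m"
      moreover have "(j,q) \<in> word_poset ts" using j that by (simp add: word_poset_def)
      ultimately show False using m(2) by blast
    qed
    then show "t = []" using tj by (simp add: filter_empty_conv)
  qed
  then have "shuffle_many (blk ts f m) = [[]]" by (rule shuffle_many_all_Nil)
  then have "pair_words (\<lambda>v. exp_sig M X T v - tunit v) (shuffle_many (blk ts f m)) = 0"
    by (simp add: pair_words_def mu_nil tunit_def)
  then show ?thesis using m(1) by (intro prod_zero) auto
qed

lemma Q_surj:
  assumes f: "f \<in> fnset N ts" and su: "f ` word_poset ts = {1..N}"
    and tw: "\<forall>t\<in>set ts. is_word d t"
  shows "(\<Prod>m\<in>{1..N}. pair_words (\<lambda>v. exp_sig M X T v - tunit v) (shuffle_many (blk ts f m)))
     = gen_moment M X T ts (kernel_of (word_poset ts) f)"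
proof -
  let ?P = "word_poset ts"
  define G where "G B = integral\<^sup>L M (\<lambda>\<omega>. \<Prod>j\<in>{j. j < length ts \<and> (\<exists>q. (j, q) \<in> B)}. X \<omega> (0, T) (block_word ts B j))" for B
  have inj: "inj_on (\<lambda>i. {x\<in>?P. f x = i}) (f ` ?P)"
  proof (rule inj_onI)
    fix i i' assume i: "i \<in> f ` ?P" and eq: "{x\<in>?P. f x = i} = {x\<in>?P. f x = i'}"
    from i obtain x where x: "x \<in> ?P" "f x = i" by auto
    then have "x \<in> {x\<in>?P. f x = i'}" using eq by blast
    then show "i = i'" using x by simp
  qed
  have gm: "gen_moment M X T ts (kernel_of ?P f) = (\<Prod>m\<in>{1..N}. G {x\<in>?P. f x = m})"
    unfolding gen_moment_def kernel_of_image G_def[symmetric] using inj su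
    by (simp add: prod.reindex)
  have fac: "pair_words (\<lambda>v. exp_sig M X T v - tunit v) (shuffle_many (blk ts f m)) = G {x\<in>?P. f x = m}"
    if m: "m \<in> {1..N}" for m
  proof -
    let ?B = "{x\<in>?P. f x = m}"
    let ?b = "blk ts f m"
    have "m \<in> f ` ?P" using m su by simp
    then obtain x where x: "x \<in> ?P" "f x = m" by blast
    obtain j q where xjq: "x = (j,q)" by (cases x)
    have jq: "(j,q) \<in> ?P" "f (j,q) = m" using x xjq by auto
    have j: "j < length ts" and q: "q < length (ts!j)" using jq by (auto simp: word_poset_def)
    have "q \<in> set (filter (\<lambda>q. f (j,q) = m) [0..<length (ts!j)])" using q jq by simp
    then have "length (?b ! j) > 0" using j by (auto simp: blk_nth filter_empty_conv length_greater_0_conv)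
    moreover have "?b ! j \<in> set ?b" using j by (simp add: blk_length)
    then have "length (?b!j) \<le> sum_list (map length ?b)" by (intro member_le_sum_list) auto
    ultimately have pos: "sum_list (map length ?b) > 0" by linarith
    have bw: "\<forall>u\<in>set ?b. is_word d u" using blk_words[OF tw] by blast
    have "pair_words (\<lambda>v. exp_sig M X T v - tunit v) (shuffle_many ?b) = pair_words (exp_sig M X T) (shuffle_many ?b)"
      unfolding pair_words_def
    proof (rule arg_cong[where f=sum_list], rule map_cong[OF refl])
      fix w assume "w \<in> set (shuffle_many ?b)"
      then have "length w > 0" using shuffle_many_length pos by metis
      then show "exp_sig M X T w - tunit w = exp_sig M X T w" by (simp add: tunit_def)
    qed
    also have "\<dots> = integral\<^sup>L M (\<lambda>\<omega>. pair_words (X \<omega> (0,T)) (shuffle_many ?b))"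
      using pw_integral words_sm[OF bw] by blast
    also have "\<dots> = G ?B"
      unfolding G_def
    proof (rule Bochner_Integration.integral_cong[OF refl])
      fix \<omega> assume w: "\<omega> \<in> space M"
      have "pair_words (X \<omega> (0,T)) (shuffle_many ?b) = prod_list (map (X \<omega> (0,T)) ?b)"
        by (rule char_sm[OF w bw])
      also have "\<dots> = (\<Prod>j\<in>{0..<length ts}. X \<omega> (0,T) (?b ! j))"
        by (simp add: prod.list_conv_set_nth blk_length)
      also have "\<dots> = (\<Prod>j\<in>{0..<length ts}. X \<omega> (0,T) (block_word ts ?B j))"
        by (rule prod.cong[OF refl]) (simp add: block_word_blk)
      also have "\<dots> = (\<Prod>j\<in>{j. j < length ts \<and> (\<exists>q. (j, q) \<in> ?B)}. X \<omega> (0, T) (block_word ts ?B j))"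
      proof (rule prod.mono_neutral_right)
        show "\<forall>i\<in>{0..<length ts} - {j. j < length ts \<and> (\<exists>q. (j, q) \<in> ?B)}. X \<omega> (0, T) (block_word ts ?B i) = 1"
        proof
          fix i assume "i \<in> {0..<length ts} - {j. j < length ts \<and> (\<exists>q. (j, q) \<in> ?B)}"
          then have "{q. (i,q) \<in> ?B} = {}" by auto
          then show "X \<omega> (0, T) (block_word ts ?B i) = 1"
            using S1[OF w] unfolding block_word_def by (simp only: sorted_list_of_set_empty list.map)
        qed
      qed auto
      finally show "pair_words (X \<omega> (0,T)) (shuffle_many ?b) =
         (\<Prod>j\<in>{j. j < length ts \<and> (\<exists>q. (j, q) \<in> ?B)}. X \<omega> (0, T) (block_word ts ?B j))" .
    qed
    finally show ?thesis .
  qed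
  show ?thesis unfolding gm by (rule prod.cong[OF refl]) (rule fac)
qed

end



theorem proposition3p3:
  fixes M :: "'a measure" and X :: "'a \<Rightarrow> real \<times> real \<Rightarrow> nat list \<Rightarrow> real"
    and d :: nat and p T :: real and ts :: "nat list list"
  assumes "prob_space M"
    and "p \<ge> 1" and "T > 0"
    and "\<forall>\<omega>\<in>space M. X \<omega> \<in> weakly_geometric d p T"
    and "\<forall>\<sigma>. is_word d \<sigma> \<longrightarrow> integrable M (\<lambda>\<omega>. X \<omega> (0, T) \<sigma>)"
    and "length ts \<ge> 1"
    and "\<forall>\<tau>\<in>set ts. \<tau> \<noteq> [] \<and> is_word d \<tau>"
  shows "pair_words (sig_cumulant M X T) (shuffle_many ts) =
    (\<Sum>a\<in>Orp ts. (-1) ^ (card a - 1) * (real (orp_fact ts a) / real (card a))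
                   * gen_moment M X T ts a)"
proof -
  note ps = assms(1)
  have S1: "X \<omega> (0,T) [] = 1" if "\<omega> \<in> space M" for \<omega>
    using assms(3,4) that by (auto simp: weakly_geometric_def)
  have Ssh: "pair_words (X \<omega> (0,T)) (shuffle u v) = X \<omega> (0,T) u * X \<omega> (0,T) v"
    if "\<omega> \<in> space M" "is_word d u" "is_word d v" for \<omega> u v
    using assms(3,4) that by (auto simp: weakly_geometric_def)
  have int: "integrable M (\<lambda>\<omega>. X \<omega> (0,T) \<sigma>)" if "is_word d \<sigma>" for \<sigma>
    using assms(5) that by simp
  have tw: "\<forall>t\<in>set ts. is_word d t" using assms(7) by simp
  let ?P = "word_poset ts"
  define L where "L = sum_list (map length ts)"
  define y where "y v = exp_sig M X T v - tunit v" for v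
  define h where "h N = (-1::real) ^ (N - 1) / real N" for N
  define gm where "gm a = gen_moment M X T ts a" for a
  define Surj where "Surj N = {f \<in> fnset N ts. f ` ?P = {1..N}}" for N
  define OF where "OF a = {f \<in> ?P \<rightarrow>\<^sub>E {1..card a}. order_pres ?P f \<and> kernel_of ?P f = a}" for a
  have finP: "finite ?P" by (rule finite_word_poset)
  have cardP: "card ?P = L" unfolding L_def by (rule card_word_poset)
  have Pne: "?P \<noteq> {}"
  proof -
    obtain t where "t \<in> set ts" using assms(6) by (cases ts) auto
    then show ?thesis using assms(7) by (auto simp: word_poset_empty_iff)
  qed
  have mu0: "exp_sig M X T [] = 1"
    by (rule mu_nil[of M X T d]) (use ps S1 Ssh int in auto)
  have step1: "pair_words (sig_cumulant M X T) (shuffle_many ts) =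
     (\<Sum>n<L. (-1) ^ n / real (Suc n) * pair_words (tpow y (Suc n)) (shuffle_many ts))"
  proof -
    have "pair_words (sig_cumulant M X T) (shuffle_many ts) =
      (\<Sum>w\<leftarrow>shuffle_many ts. \<Sum>n<L. (-1) ^ n / real (Suc n) * tpow y (Suc n) w)"
      unfolding pair_words_def sig_cumulant_def
    proof (rule arg_cong[where f=sum_list], rule map_cong[OF refl])
      fix w assume "w \<in> set (shuffle_many ts)"
      then have "length w \<le> L" unfolding L_def by (simp add: shuffle_many_length)
      then show "tlog (exp_sig M X T) w = (\<Sum>n<L. (-1) ^ n / real (Suc n) * tpow y (Suc n) w)"
        unfolding y_def[abs_def] by (rule tlog_trunc[of "exp_sig M X T", OF mu0])
    qed
    also have "\<dots> = (\<Sum>n<L. \<Sum>w\<leftarrow>shuffle_many ts. (-1) ^ n / real (Suc n) * tpow y (Suc n) w)"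
      by (rule sum_list_sum_swap)
    also have "\<dots> = (\<Sum>n<L. (-1) ^ n / real (Suc n) * pair_words (tpow y (Suc n)) (shuffle_many ts))"
      by (rule sum.cong[OF refl]) (simp only: pair_words_def sum_list_const_mult)
    finally show ?thesis .
  qed
  have step2: "pair_words (tpow y N) (shuffle_many ts) = (\<Sum>f\<in>Surj N. gm (kernel_of ?P f))" for N
  proof -
    have "pair_words (tpow y N) (shuffle_many ts) =
        (\<Sum>f\<in>fnset N ts. \<Prod>m\<in>{1..N}. pair_words y (shuffle_many (blk ts f m)))"
      by (rule tpow_shuffle)
    also have "\<dots> = (\<Sum>f\<in>Surj N. \<Prod>m\<in>{1..N}. pair_words y (shuffle_many (blk ts f m)))"
    proof (rule sum.mono_neutral_right)
      show "finite (fnset N ts)" by (rule finite_fnset)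
      show "Surj N \<subseteq> fnset N ts" by (auto simp: Surj_def)
      show "\<forall>f\<in>fnset N ts - Surj N. (\<Prod>m\<in>{1..N}. pair_words y (shuffle_many (blk ts f m))) = 0"
        unfolding y_def[abs_def]
        using Q_nonsurj[of M X T d] ps S1 Ssh int by (auto simp: Surj_def)
    qed
    also have "\<dots> = (\<Sum>f\<in>Surj N. gm (kernel_of ?P f))"
    proof (rule sum.cong[OF refl])
      fix f assume "f \<in> Surj N"
      then show "(\<Prod>m\<in>{1..N}. pair_words y (shuffle_many (blk ts f m))) = gm (kernel_of ?P f)"
        unfolding y_def[abs_def] gm_def
        using Q_surj[of M X T d f N ts] ps S1 Ssh int tw by (auto simp: Surj_def)
    qed
    finally show ?thesis .
  qed
  have card_ker: "card (kernel_of ?P f) = card (f ` ?P)" for f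
    by (rule card_kernel[OF finP])
  have cardSurj: "card (kernel_of ?P f) = N" if "f \<in> Surj N" for f N
    using that card_ker by (simp add: Surj_def)
  define g where "g f = h (card (kernel_of ?P f)) * gm (kernel_of ?P f)" for f
  define U where "U = (\<Union>n\<in>{..<L}. Surj (Suc n))"
  have finSurj: "finite (Surj N)" for N
    by (rule finite_subset[OF _ finite_fnset[of N ts]]) (auto simp: Surj_def)
  have LHS: "pair_words (sig_cumulant M X T) (shuffle_many ts) = (\<Sum>f\<in>U. g f)"
  proof -
    have "pair_words (sig_cumulant M X T) (shuffle_many ts) = (\<Sum>n<L. \<Sum>f\<in>Surj (Suc n). g f)"
      unfolding step1 step2
    proof (rule sum.cong[OF refl])
      fix n
      show "(-1) ^ n / real (Suc n) * (\<Sum>f\<in>Surj (Suc n). gm (kernel_of ?P f)) = (\<Sum>f\<in>Surj (Suc n). g f)"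
        unfolding sum_distrib_left
        by (rule sum.cong[OF refl]) (simp add: g_def cardSurj h_def)
    qed
    also have "\<dots> = (\<Sum>f\<in>U. g f)"
      unfolding U_def
    proof (rule sum.UNION_disjoint[symmetric])
      show "\<forall>i\<in>{..<L}. \<forall>j\<in>{..<L}. i \<noteq> j \<longrightarrow> Surj (Suc i) \<inter> Surj (Suc j) = {}"
      proof (intro ballI impI)
        fix i j :: nat assume ij: "i \<noteq> j"
        show "Surj (Suc i) \<inter> Surj (Suc j) = {}"
        proof (rule ccontr)
          assume "Surj (Suc i) \<inter> Surj (Suc j) \<noteq> {}"
          then obtain f where f1: "f \<in> Surj (Suc i)" and f2: "f \<in> Surj (Suc j)" by blast
          show False using cardSurj[OF f1] cardSurj[OF f2] ij by simp
        qed
      qed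
    qed (auto simp: finSurj)
    finally show ?thesis .
  qed
  have finOF: "finite (OF a)" for a
  proof -
    have "finite (?P \<rightarrow>\<^sub>E {1..card a})" by (rule finite_PiE) (auto simp: finP)
    then show ?thesis unfolding OF_def by (rule finite_subset[rotated]) auto
  qed
  have RHS: "(\<Sum>a\<in>Orp ts. (-1) ^ (card a - 1) * (real (orp_fact ts a) / real (card a)) * gen_moment M X T ts a)
     = (\<Sum>f\<in>(\<Union>a\<in>Orp ts. OF a). g f)"
  proof -
    have "(\<Sum>a\<in>Orp ts. (-1) ^ (card a - 1) * (real (orp_fact ts a) / real (card a)) * gen_moment M X T ts a)
       = (\<Sum>a\<in>Orp ts. \<Sum>f\<in>OF a. g f)"
    proof (rule sum.cong[OF refl])
      fix a assume "a \<in> Orp ts"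
      have "(\<Sum>f\<in>OF a. g f) = (\<Sum>f\<in>OF a. h (card a) * gm a)"
        by (rule sum.cong[OF refl]) (simp add: OF_def g_def)
      also have "\<dots> = real (card (OF a)) * (h (card a) * gm a)" by simp
      finally have sg: "(\<Sum>f\<in>OF a. g f) = real (card (OF a)) * (h (card a) * gm a)" .
      show "(-1) ^ (card a - 1) * (real (orp_fact ts a) / real (card a)) * gen_moment M X T ts a
          = (\<Sum>f\<in>OF a. g f)"
      proof -
        have of: "orp_fact ts a = card (OF a)" unfolding orp_fact_def OF_def ..
        show ?thesis unfolding of using sg by (simp add: h_def gm_def)
      qed
    qed
    also have "\<dots> = (\<Sum>f\<in>(\<Union>a\<in>Orp ts. OF a). g f)"
    proof (rule sum.UNION_disjoint[symmetric])
      show "\<forall>i\<in>Orp ts. \<forall>j\<in>Orp ts. i \<noteq> j \<longrightarrow> OF i \<inter> OF j = {}"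
        by (auto simp: OF_def)
    qed (auto simp: finite_Orp finOF)
    finally show ?thesis .
  qed
  have UU: "(\<Union>a\<in>Orp ts. OF a) = U"
  proof (intro set_eqI iffI)
    fix f assume "f \<in> (\<Union>a\<in>Orp ts. OF a)"
    then obtain a where a: "a \<in> Orp ts" and f: "f \<in> OF a" by blast
    have fP: "f \<in> ?P \<rightarrow>\<^sub>E {1..card a}" and op: "order_pres ?P f" and ka: "kernel_of ?P f = a"
      using f by (auto simp: OF_def)
    have c: "card (f ` ?P) = card a" using card_ker[of f] unfolding ka by simp
    have sub: "f ` ?P \<subseteq> {1..card a}" using fP by auto
    have im: "f ` ?P = {1..card a}"
      by (rule card_subset_eq[OF _ sub]) (use c in auto)
    have "card a \<ge> 1"
    proof -
      have "f ` ?P \<noteq> {}" using Pne by simp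
      then have "card (f ` ?P) \<noteq> 0" using finP by simp
      then show ?thesis using c by simp
    qed
    moreover have "card a \<le> L"
      using c card_image_le[OF finP, of f] cardP by simp
    ultimately have n: "card a = Suc (card a - 1)" "card a - 1 < L" by auto
    have "f \<in> Surj (Suc (card a - 1))" using fP op im n(1) by (auto simp: Surj_def fnset_def)
    then show "f \<in> U" using n(2) unfolding U_def by blast
  next
    fix f assume "f \<in> U"
    then obtain n where n: "n < L" and f: "f \<in> Surj (Suc n)" unfolding U_def by blast
    have ko: "kernel_of ?P f \<in> Orp ts" using f by (auto simp: Surj_def fnset_def Orp_def)
    have "card (kernel_of ?P f) = Suc n" using cardSurj[OF f] .
    then have "f \<in> OF (kernel_of ?P f)" using f by (auto simp: OF_def Surj_def fnset_def)
    then show "f \<in> (\<Union>a\<in>Orp ts. OF a)" using ko by blast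
  qed
  show ?thesis using LHS RHS UU by simp
qed


end
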